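(* Under Assumption 1 and the partition setting of the context, the Shor relaxation (S) (equivalently the convex relaxation (R)) is exact, i.e. $v^\star=p^\star=c^\star$, if for every $h\in H$ there are no $\boldsymbol{\mu}\in\mathbb{R}^m$ and reals $x_{j_{h'}},z_{j_{h'}}$ ($h'\in H$) satisfying all of the following: (a) $d_h^*+\sum_{i\in M}\mu_i\xi^{ih}=0$; (b) $c_{j_h}+\sum_{i\in M}\mu_ia_{ij_h}=0$; (c) $d_{h'}^*+\sum_{i\in M}\mu_i\xi^{ih'}\ge 0$ for all $h'\in H\setminus\{h\}$; (d) $(d_{h'}^*+\sum_{i\in M}\mu_i\xi^{ih'})x_{j_{h'}}=-(c_{j_{h'}}+\sum_{i\in M}\mu_ia_{ij_{h'}})$ for all $h'\in H\setminus\{h\}$; (e) $(d_{h'}^*+\sum_{i\in M}\mu_i\xi^{ih'})z_{j_{h'}}=-(c_{j_{h'}}+\sum_{i\in M}\mu_ia_{ij_{h'}})x_{j_{h'}}$ for all $h'\in H\setminus\{h\}$; (f) for all $i\in M$: $\sum_{h'\in H}\xi^{ih'}\big[z_{j_{h'}}+\sum_{j\in N_{h'}\setminus\{j_{h'}\}}x^h_j(\boldsymbol{\mu})^2\big]+2\sum_{h'\in H}a_{ij_{h'}}x_{j_{h'}}+2\sum_{j\in N\setminus N_H}a_{ij}x^h_j(\boldsymbol{\mu})\le b_i$; (g) $x_{j_{h'}}^2\le z_{j_{h'}}$ for all $h'\in H$; (h) $\mu_i\ge 0$ for all $i\in M$.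
   Context: Let $N=\{1,\dots,n\}$ and $M=\{1,\dots,m\}$. Let ${\bf D}$ and ${\bf A}^i$ ($i\in M$) be real diagonal $n\times n$ matrices, ${\bf c},{\bf a}_i\in\mathbb{R}^n$ ($a_{ij}$ denotes the $j$-th entry of ${\bf a}_i$) and $b_i\in\mathbb{R}$. The diagonal QCQP is (P): $c^\star=\inf\{{\bf x}^\top{\bf D}{\bf x}+2{\bf c}^\top{\bf x} : {\bf x}^\top{\bf A}^i{\bf x}+2{\bf a}_i^\top{\bf x}\le b_i,\ i\in M\}$. Its Shor relaxation is (S): $v^\star=\inf\{{\bf D}\bullet{\bf X}+2{\bf c}^\top{\bf x} : {\bf A}^i\bullet{\bf X}+2{\bf a}_i^\top{\bf x}\le b_i\ (i\in M),\ {\bf X}-{\bf x}{\bf x}^\top\succeq {\bf O}\}$, where ${\bf P}\bullet{\bf Q}=\mathrm{trace}({\bf P}{\bf Q})$. The convex relaxation is (R): $p^\star=\inf\{\sum_{j\in N}D_{jj}z_j+2\sum_{j\in N}c_jx_j : \sum_{j\in N}A^i_{jj}z_j+2\sum_{j\in N}a_{ij}x_j\le b_i\ (i\in M),\ x_j^2\le z_j\ (j\in N)\}$. Assumption 1: (i) the feasible region of (P) is nonempty; (ii) there exists $\bar{\bf y}\ge 0$ with $\sum_{i\in M}\bar y_i{\bf A}^i\succ{\bf O}$; (iii) the feasible region of (S) has nonempty interior. Partition setting: $\{N_h\}_{h\in H}$ is a partition of $N$ such that for each $h\in H$ and $i\in M$ there is a number $\xi^{ih}$ with $A^i_{jj}=\xi^{ih}$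 for all $j\in N_h$. For each $h\in H$, $d_h^*=\min_{j\in N_h}D_{jj}$ and it is assumed that this minimum is attained at a unique index $j_h\in N_h$. $N_H=\{j_h : h\in H\}$. For fixed $h\in H$ and $j\in N\setminus N_H$, $x_j^h(\boldsymbol{\mu})=-\frac{c_j+\sum_{i\in M}\mu_ia_{ij}}{D_{jj}-d_h^*}$ if $j\in N_h\setminus\{j_h\}$, and $x_j^h(\boldsymbol{\mu})=-\frac{c_j+\sum_{i\in M}\mu_ia_{ij}}{D_{jj}+\sum_{i\in M}\xi^{ih'}\mu_i}$ if $j\in N_{h'}\setminus\{j_{h'}\}$ with $h'\ne h$ (the denominators are positive under condition (c)). *)

theory Defs
  imports "HOL-Analysis.Analysis"
begin

definition diag_mat :: "real^'n^'n \<Rightarrow> bool" where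
  "diag_mat A \<longleftrightarrow> (\<forall>i j. i \<noteq> j \<longrightarrow> A$i$j = 0)"

definition outer :: "real^'n \<Rightarrow> real^'n^'n" where
  "outer x = (\<chi> i j. x$i * x$j)"

definition mat_dot :: "real^'n^'n \<Rightarrow> real^'n^'n \<Rightarrow> real" where
  "mat_dot P Q = trace (P ** Q)"

definition psd :: "real^'n^'n \<Rightarrow> bool" where
  "psd Y \<longleftrightarrow> transpose Y = Y \<and> (\<forall>v. 0 \<le> v \<bullet> (Y *v v))"

definition pd :: "real^'n^'n \<Rightarrow> bool" where
  "pd Y \<longleftrightarrow> transpose Y = Y \<and> (\<forall>v. v \<noteq> 0 \<longrightarrow> 0 < v \<bullet> (Y *v v))"

definition P_feasible :: "('m \<Rightarrow> real^'n^'n) \<Rightarrow> ('m \<Rightarrow> real^'n) \<Rightarrow> ('m \<Rightarrow> real) \<Rightarrow> real^'n \<Rightarrow> bool" where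
  "P_feasible A a b x \<longleftrightarrow> (\<forall>i. x \<bullet> (A i *v x) + 2 * (a i \<bullet> x) \<le> b i)"

definition cstar :: "real^'n^'n \<Rightarrow> real^'n \<Rightarrow> ('m \<Rightarrow> real^'n^'n) \<Rightarrow> ('m \<Rightarrow> real^'n) \<Rightarrow> ('m \<Rightarrow> real) \<Rightarrow> real" where
  "cstar D c A a b = Inf {x \<bullet> (D *v x) + 2 * (c \<bullet> x) | x. P_feasible A a b x}"

definition S_feasible :: "('m \<Rightarrow> real^'n^'n) \<Rightarrow> ('m \<Rightarrow> real^'n) \<Rightarrow> ('m \<Rightarrow> real) \<Rightarrow> real^'n \<Rightarrow> real^'n^'n \<Rightarrow> bool" where
  "S_feasible A a b x X \<longleftrightarrow> (\<forall>i. mat_dot (A i) X + 2 * (a i \<bullet> x) \<le> b i) \<and> psd (X - outer x)"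

definition vstar :: "real^'n^'n \<Rightarrow> real^'n \<Rightarrow> ('m \<Rightarrow> real^'n^'n) \<Rightarrow> ('m \<Rightarrow> real^'n) \<Rightarrow> ('m \<Rightarrow> real) \<Rightarrow> real" where
  "vstar D c A a b = Inf {mat_dot D X + 2 * (c \<bullet> x) | x X. S_feasible A a b x X}"

text \<open>Nonempty interior of the feasible region of (S), as a subset of R^n \<times> S^n
  (S^n = symmetric matrices).\<close>
definition S_interior_nonempty :: "('m \<Rightarrow> real^'n^'n) \<Rightarrow> ('m \<Rightarrow> real^'n) \<Rightarrow> ('m \<Rightarrow> real) \<Rightarrow> bool" where
  "S_interior_nonempty A a b \<longleftrightarrow>
     (\<exists>x X e. e > 0 \<and> transpose X = X \<and>
        (\<forall>y Y. transpose Y = Y \<longrightarrow> dist y x < e \<longrightarrow> dist Y X < e \<longrightarrow> S_feasible A a b y Y))"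

definition R_feasible :: "('m \<Rightarrow> real^'n^'n) \<Rightarrow> ('m \<Rightarrow> real^'n) \<Rightarrow> ('m \<Rightarrow> real) \<Rightarrow> real^'n \<Rightarrow> real^'n \<Rightarrow> bool" where
  "R_feasible A a b x z \<longleftrightarrow> (\<forall>i. (\<Sum>j\<in>UNIV. A i $ j $ j * z$j) + 2 * (a i \<bullet> x) \<le> b i)
      \<and> (\<forall>j. (x$j)^2 \<le> z$j)"

definition pstar :: "real^'n^'n \<Rightarrow> real^'n \<Rightarrow> ('m \<Rightarrow> real^'n^'n) \<Rightarrow> ('m \<Rightarrow> real^'n) \<Rightarrow> ('m \<Rightarrow> real) \<Rightarrow> real" where
  "pstar D c A a b = Inf {(\<Sum>j\<in>UNIV. D$j$j * z$j) + 2 * (c \<bullet> x) | x z. R_feasible A a b x z}"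

definition dstar :: "real^'n^'n \<Rightarrow> ('h \<Rightarrow> 'n set) \<Rightarrow> 'h \<Rightarrow> real" where
  "dstar D Np h = Min ((\<lambda>j. D$j$j) ` Np h)"

definition part_idx :: "('h \<Rightarrow> 'n set) \<Rightarrow> 'n \<Rightarrow> 'h" where
  "part_idx Np j = (THE h. j \<in> Np h)"

definition xh :: "real^'n^'n \<Rightarrow> real^'n \<Rightarrow> ('m \<Rightarrow> real^'n) \<Rightarrow> ('h \<Rightarrow> 'n set) \<Rightarrow> ('m \<Rightarrow> 'h \<Rightarrow> real)
     \<Rightarrow> 'h \<Rightarrow> ('m \<Rightarrow> real) \<Rightarrow> 'n \<Rightarrow> real" where
  "xh D c a Np \<xi> h \<mu> j =
     (let h' = part_idx Np j; num = c$j + (\<Sum>i\<in>UNIV. \<mu> i * a i $ j) in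
      if h' = h then - num / (D$j$j - dstar D Np h)
      else - num / (D$j$j + (\<Sum>i\<in>UNIV. \<xi> i h' * \<mu> i)))"

end

theory Submission
  imports Defs
begin


lemma inner_sum: "(a::real^'n) \<bullet> x = (\<Sum>j\<in>UNIV. a$j * x$j)"
  by (simp add: inner_vec_def)

lemma diag_quad: "diag_mat A \<Longrightarrow> x \<bullet> (A *v x) = (\<Sum>j\<in>UNIV. A$j$j * (x$j)^2)"
proof -
  assume d: "diag_mat A"
  have "x \<bullet> (A *v x) = (\<Sum>j\<in>UNIV. x$j * (\<Sum>k\<in>UNIV. A$j$k * x$k))"
    by (simp add: inner_vec_def matrix_vector_mult_def)
  also have "\<dots> = (\<Sum>j\<in>UNIV. x$j * (A$j$j * x$j))"
  proof (rule sum.cong[OF refl])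
    fix j
    have "(\<Sum>k\<in>UNIV. A$j$k * x$k) = A$j$j * x$j"
    proof -
      have "\<And>k. A$j$k * x$k = (if k = j then A$j$j * x$j else 0)" using d by (auto simp: diag_mat_def)
      then have "(\<Sum>k\<in>UNIV. A$j$k * x$k) = (\<Sum>k\<in>UNIV. if k = j then A$j$j * x$j else 0)" by (intro sum.cong) auto
      then show ?thesis by simp
    qed
    then show "x$j * (\<Sum>k\<in>UNIV. A$j$k * x$k) = x$j * (A$j$j * x$j)" by simp
  qed
  finally show ?thesis by (simp add: power2_eq_square algebra_simps)
qed



lemma small_eps:
  fixes C K :: real
  assumes "\<And>e. e > 0 \<Longrightarrow> 0 \<le> C + e*K" shows "0 \<le> C"
proof (rule ccontr)
  assume "\<not> 0 \<le> C"
  define e where "e = -C/(2*(\<bar>K\<bar>+1))"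
  have ep: "e > 0" using \<open>\<not> 0 \<le> C\<close> unfolding e_def by (intro divide_pos_pos) auto
  have nz: "\<bar>K\<bar>+1 > 0" by simp
  have "e*(\<bar>K\<bar>+1) = -C/2" using nz unfolding e_def by (simp add: field_simps)
  then have e2: "e*\<bar>K\<bar> = -C/2 - e" by (simp add: algebra_simps)
  have "e*K \<le> e*\<bar>K\<bar>" using ep by (simp add: mult_left_mono)
  then have "e*K \<le> -C/2 - e" using e2 by linarith
  then show False using assms[OF ep] ep \<open>\<not> 0 \<le> C\<close> by linarith
qed

lemma big_t:
  fixes C L :: real
  assumes "\<And>t. t \<ge> 0 \<Longrightarrow> 0 \<le> C + t*L" shows "0 \<le> L"
proof (rule ccontr)
  assume L: "\<not> 0 \<le> L"
  define t where "t = (\<bar>C\<bar>+1)/(-L)"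
  have tp: "t \<ge> 0" using L unfolding t_def by (intro divide_nonneg_nonneg) auto
  have "t*L = -(\<bar>C\<bar>+1)" using L by (simp add: t_def)
  then show False using assms[OF tp] by linarith
qed

lemma comb_less:
  fixes a b c d s t :: real
  assumes "a < b" "c < d" "0 \<le> s" "0 \<le> t" "s + t = 1"
  shows "s*a + t*c < s*b + t*d"
proof (cases "s = 0")
  case True then show ?thesis using assms by simp
next
  case False
  then have "s*a < s*b" using assms by simp
  moreover have "t*c \<le> t*d" using assms by (simp add: mult_left_mono)
  ultimately show ?thesis by linarith
qed

lemma lagrange:
  fixes f :: "'w::real_vector \<Rightarrow> real" and g :: "'m::finite \<Rightarrow> 'w \<Rightarrow> real"
  assumes cvx: "convex Ks"
    and fl: "\<And>x y u v. u + v = 1 \<Longrightarrow> f (u *\<^sub>R x + v *\<^sub>R y) = u * f x + v * f y"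
    and gl: "\<And>i x y u v. u + v = 1 \<Longrightarrow> g i (u *\<^sub>R x + v *\<^sub>R y) = u * g i x + v * g i y"
    and opt: "\<And>w. w \<in> Ks \<Longrightarrow> (\<forall>i. g i w \<le> 0) \<Longrightarrow> p \<le> f w"
    and triv: "\<And>i w. T i \<Longrightarrow> g i w = 0"
    and w0: "w0 \<in> Ks" and w0s: "\<And>i. \<not> T i \<Longrightarrow> g i w0 < 0"
  shows "\<exists>\<mu>. (\<forall>i. 0 \<le> \<mu> i) \<and> (\<forall>w\<in>Ks. p \<le> f w + (\<Sum>i\<in>UNIV. \<mu> i * g i w))"
proof -
  define V :: "(real \<times> (real^'m)) set" where
    "V = {(u0,u). \<exists>w\<in>Ks. f w - p < u0 \<and> (\<forall>i. \<not> T i \<longrightarrow> g i w < u$i)}"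
  have cV: "convex V"
  proof (rule convexI)
    fix v1 v2 :: "real \<times> (real^'m)" and s t :: real
    assume v1: "v1 \<in> V" and v2: "v2 \<in> V" and st: "0 \<le> s" "0 \<le> t" "s + t = 1"
    obtain u0 u w where v1e: "v1 = (u0,u)" "w\<in>Ks" "f w - p < u0" "\<forall>i. \<not> T i \<longrightarrow> g i w < u$i"
      using v1 unfolding V_def by auto
    obtain u0' u' w' where v2e: "v2 = (u0',u')" "w'\<in>Ks" "f w' - p < u0'" "\<forall>i. \<not> T i \<longrightarrow> g i w' < u'$i"
      using v2 unfolding V_def by auto
    have wc: "s *\<^sub>R w + t *\<^sub>R w' \<in> Ks" using cvx v1e(2) v2e(2) st unfolding convex_def by blast
    have "f (s *\<^sub>R w + t *\<^sub>R w') - p = s*(f w - p) + t*(f w' - p)"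
    proof -
      have pp: "p = s*p + t*p" using st(3) by (metis distrib_right mult.left_neutral)
      have "f (s *\<^sub>R w + t *\<^sub>R w') - p = s*f w + t*f w' - (s*p + t*p)" using fl[OF st(3)] pp by simp
      then show ?thesis by (simp add: algebra_simps)
    qed
    also have "\<dots> < s*u0 + t*u0'" using comb_less[OF v1e(3) v2e(3) st] .
    finally have 1: "f (s *\<^sub>R w + t *\<^sub>R w') - p < s*u0 + t*u0'" .
    have 2: "g i (s *\<^sub>R w + t *\<^sub>R w') < (s *\<^sub>R u + t *\<^sub>R u')$i" if "\<not> T i" for i
    proof -
      have "g i (s *\<^sub>R w + t *\<^sub>R w') = s * g i w + t * g i w'" using gl[OF st(3)] .
      also have "\<dots> < s * u$i + t * u'$i" using comb_less[OF _ _ st] v1e(4) v2e(4) that by blast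
      finally show ?thesis by simp
    qed
    show "s *\<^sub>R v1 + t *\<^sub>R v2 \<in> V" unfolding V_def using v1e(1) v2e(1) wc 1 2 by auto
  qed
  have n0: "(0::real \<times> (real^'m)) \<notin> V"
  proof
    assume "(0::real \<times> (real^'m)) \<in> V"
    then obtain w where w: "w\<in>Ks" "f w - p < 0" "\<forall>i. \<not> T i \<longrightarrow> g i w < 0"
      unfolding V_def by (auto simp: zero_prod_def)
    have gw: "\<forall>i. g i w \<le> 0" using w(3) triv by (metis order.order_iff_strict)
    show False using opt[OF w(1) gw] w(2) by linarith
  qed
  obtain aa where aa: "aa \<noteq> 0" "\<forall>v\<in>V. 0 \<le> inner aa v"
    using separating_hyperplane_set_0[OF cV n0] by blast
  obtain a0 lam where aeq: "aa = (a0, lam)" by (cases aa)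
  have inV: "0 \<le> a0*u0 + lam \<bullet> u" if "w\<in>Ks" "f w - p < u0" "\<forall>i. \<not> T i \<longrightarrow> g i w < u$i" for w u0 u
  proof -
    have "(u0,u) \<in> V" unfolding V_def using that by auto
    then show ?thesis using aa(2) aeq by auto
  qed
  define F where "F = (\<chi> k. g k w0 + 1)"
  have Fk: "g k w0 < F$k" for k by (simp add: F_def)
  have a0nn: "0 \<le> a0"
  proof (rule big_t[of "a0*(f w0 - p + 1) + lam \<bullet> F"])
    fix t :: real assume "t \<ge> 0"
    have "0 \<le> a0*(f w0 - p + 1 + t) + lam \<bullet> F" using inV[OF w0, of "f w0 - p + 1 + t" F] Fk \<open>t\<ge>0\<close> by auto
    then show "0 \<le> a0*(f w0 - p + 1) + lam \<bullet> F + t*a0" by (simp add: algebra_simps)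
  qed
  have lamnn: "0 \<le> lam$i" for i
  proof (rule big_t[of "a0*(f w0 - p + 1) + lam \<bullet> F"])
    fix t :: real assume "t \<ge> 0"
    have "g k w0 < (F + t *\<^sub>R axis i 1)$k" for k using Fk[of k] \<open>t\<ge>0\<close> by (cases "k = i") (auto simp: axis_def)
    then have "0 \<le> a0*(f w0 - p + 1) + lam \<bullet> (F + t *\<^sub>R axis i 1)" using inV[OF w0] by auto
    then show "0 \<le> a0*(f w0 - p + 1) + lam \<bullet> F + t*lam$i"
      by (simp add: inner_add_right inner_axis algebra_simps)
  qed
  have lamT: "lam$i = 0" if "T i" for i
  proof -
    have "0 \<le> - lam$i"
    proof (rule big_t[of "a0*(f w0 - p + 1) + lam \<bullet> F"])
      fix t :: real assume "t \<ge> 0"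
      have "\<not> T k \<longrightarrow> g k w0 < (F - t *\<^sub>R axis i 1)$k" for k using Fk[of k] that by (auto simp: axis_def)
      then have "0 \<le> a0*(f w0 - p + 1) + lam \<bullet> (F - t *\<^sub>R axis i 1)" using inV[OF w0] by auto
      then show "0 \<le> a0*(f w0 - p + 1) + lam \<bullet> F + t*(- lam$i)"
        by (simp add: inner_diff_right inner_axis algebra_simps)
    qed
    then show ?thesis using lamnn[of i] by linarith
  qed
  have claimA: "0 \<le> a0*(f w - p) + (\<Sum>k\<in>UNIV. lam$k * g k w)" if w: "w\<in>Ks" for w
  proof (rule small_eps[where K="a0 + (\<Sum>k\<in>UNIV. lam$k)"])
    fix e :: real assume e: "e > 0"
    have "0 \<le> a0*(f w - p + e) + lam \<bullet> (\<chi> k. g k w + e)" using inV[OF w] e by auto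
    also have "lam \<bullet> (\<chi> k. g k w + e) = (\<Sum>k\<in>UNIV. lam$k * g k w) + e * (\<Sum>k\<in>UNIV. lam$k)"
      by (simp add: inner_vec_def algebra_simps sum.distrib sum_distrib_left)
    finally show "0 \<le> a0*(f w - p) + (\<Sum>k\<in>UNIV. lam$k * g k w) + e*(a0 + (\<Sum>k\<in>UNIV. lam$k))"
      by (simp add: algebra_simps)
  qed
  have a0p: "0 < a0"
  proof (rule ccontr)
    assume "\<not> 0 < a0"
    then have a00: "a0 = 0" using a0nn by simp
    have s0: "0 \<le> (\<Sum>k\<in>UNIV. lam$k * g k w0)" using claimA[OF w0] a00 by simp
    have tnp: "lam$k * g k w0 \<le> 0" for k
      using lamnn[of k] w0s[of k] lamT[of k] by (cases "T k") (auto simp: mult_nonneg_nonpos)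
    have "(\<Sum>k\<in>UNIV. - (lam$k * g k w0)) = 0"
    proof -
      have "(\<Sum>k\<in>UNIV. lam$k * g k w0) \<le> 0" by (rule sum_nonpos) (simp add: tnp)
      then show ?thesis using s0 by (simp add: sum_negf)
    qed
    then have "\<forall>k\<in>UNIV. - (lam$k * g k w0) = 0"
      by (subst sum_nonneg_eq_0_iff[symmetric]) (auto simp: tnp)
    then have "lam$k = 0" for k using w0s[of k] lamT[of k] by (cases "T k") auto
    then have "lam = 0" by (simp add: vec_eq_iff)
    then show False using aa(1) aeq a00 by (simp add: zero_prod_def)
  qed
  define \<mu> where "\<mu> i = lam$i / a0" for i
  show ?thesis
  proof (intro exI conjI allI ballI)
    fix i show "0 \<le> \<mu> i" using lamnn a0p by (simp add: \<mu>_def)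
  next
    fix w assume w: "w \<in> Ks"
    have "(\<Sum>i\<in>UNIV. \<mu> i * g i w) = (\<Sum>k\<in>UNIV. lam$k * g k w) / a0"
      by (simp add: \<mu>_def sum_divide_distrib)
    moreover have "0 \<le> (f w - p) + (\<Sum>k\<in>UNIV. lam$k * g k w) / a0"
    proof -
      have "0 \<le> (a0*(f w - p) + (\<Sum>k\<in>UNIV. lam$k * g k w)) / a0" using claimA[OF w] a0p by simp
      then show ?thesis using a0p by (simp add: add_divide_distrib)
    qed
    ultimately show "p \<le> f w + (\<Sum>i\<in>UNIV. \<mu> i * g i w)" by linarith
  qed
qed



definition gR :: "('m \<Rightarrow> real^'n^'n) \<Rightarrow> ('m \<Rightarrow> real^'n) \<Rightarrow> ('m \<Rightarrow> real) \<Rightarrow> 'm \<Rightarrow> real^'n \<Rightarrow> real^'n \<Rightarrow> real" where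
  "gR A a b i x z = (\<Sum>j\<in>UNIV. A i $ j $ j * z$j) + 2 * (a i \<bullet> x) - b i"

definition fR :: "real^'n^'n \<Rightarrow> real^'n \<Rightarrow> real^'n \<Rightarrow> real^'n \<Rightarrow> real" where
  "fR D c x z = (\<Sum>j\<in>UNIV. D$j$j * z$j) + 2 * (c \<bullet> x)"

lemma R_feas_gR: "R_feasible A a b x z \<longleftrightarrow> (\<forall>i. gR A a b i x z \<le> 0) \<and> (\<forall>j. (x$j)^2 \<le> z$j)"
  unfolding R_feasible_def gR_def by auto

lemma matdot_diag:
  assumes d: "diag_mat P" shows "mat_dot P X = (\<Sum>j\<in>UNIV. P$j$j * X$j$j)"
proof -
  have "mat_dot P X = (\<Sum>j\<in>UNIV. (\<Sum>k\<in>UNIV. P$j$k * X$k$j))"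
    by (simp add: mat_dot_def trace_def matrix_matrix_mult_def)
  also have "\<dots> = (\<Sum>j\<in>UNIV. P$j$j * X$j$j)"
  proof (rule sum.cong[OF refl])
    fix j
    have "(\<Sum>k\<in>UNIV. P$j$k * X$k$j) = (\<Sum>k\<in>UNIV. if k = j then P$j$j * X$j$j else 0)"
      using d by (intro sum.cong) (auto simp: diag_mat_def)
    then show "(\<Sum>k\<in>UNIV. P$j$k * X$k$j) = P$j$j * X$j$j" by simp
  qed
  finally show ?thesis .
qed

lemma quad_axis: "axis j 1 \<bullet> (Y *v axis j (1::real)) = Y$j$j"
proof -
  have "(Y *v axis j (1::real))$j = Y$j$j"
  proof -
    have "(\<Sum>k\<in>UNIV. Y$j$k * axis j (1::real) $ k) = (\<Sum>k\<in>UNIV. if k = j then Y$j$j else 0)"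
      by (intro sum.cong) (auto simp: axis_def)
    then show ?thesis by (simp add: matrix_vector_mult_def)
  qed
  then show ?thesis by (simp add: inner_axis')
qed

lemma psd_diag: "psd Y \<Longrightarrow> 0 \<le> Y$j$j"
proof -
  assume "psd Y"
  then have "0 \<le> axis j 1 \<bullet> (Y *v axis j (1::real))" unfolding psd_def by blast
  then show ?thesis by (simp only: quad_axis)
qed

lemma pd_diag: "pd Y \<Longrightarrow> 0 < Y$j$j"
proof -
  assume "pd Y"
  moreover have "axis j (1::real) \<noteq> 0" by simp
  ultimately have "0 < axis j 1 \<bullet> (Y *v axis j (1::real))" unfolding pd_def by blast
  then show ?thesis by (simp only: quad_axis)
qed

lemma diag_psd:
  assumes "\<forall>j. 0 \<le> d$j"
  shows "psd (\<chi> r s. if r = s then d$r else (0::real))"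
proof -
  let ?E = "(\<chi> r s. if r = s then d$r else (0::real))"
  have dm: "diag_mat ?E" by (simp add: diag_mat_def)
  have "transpose ?E = ?E" by (simp add: transpose_def vec_eq_iff)
  moreover have "0 \<le> v \<bullet> (?E *v v)" for v
    using diag_quad[OF dm, of v] assms by (simp add: sum_nonneg)
  ultimately show ?thesis unfolding psd_def by blast
qed

lemma SR_sets:
  assumes dD: "diag_mat D" and dA: "\<forall>i. diag_mat (A i)"
  shows "{mat_dot D X + 2 * (c \<bullet> x) | x X. S_feasible A a b x X}
       = {(\<Sum>j\<in>UNIV. D$j$j * z$j) + 2 * (c \<bullet> x) | x z. R_feasible A a b x z}"
proof (intro set_eqI iffI)
  fix v assume "v \<in> {mat_dot D X + 2 * (c \<bullet> x) | x X. S_feasible A a b x X}"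
  then obtain x X where v: "v = mat_dot D X + 2 * (c \<bullet> x)" and S: "S_feasible A a b x X" by blast
  define z where "z = (\<chi> j. X$j$j)"
  have "R_feasible A a b x z"
    unfolding R_feasible_def
  proof (intro conjI allI)
    fix i show "(\<Sum>j\<in>UNIV. A i $ j $ j * z$j) + 2 * (a i \<bullet> x) \<le> b i"
    proof -
      have "mat_dot (A i) X + 2 * (a i \<bullet> x) \<le> b i" using S by (simp add: S_feasible_def)
      then show ?thesis using matdot_diag[of "A i" X] dA by (simp add: z_def)
    qed
  next
    fix j
    have "0 \<le> (X - outer x)$j$j" using S psd_diag unfolding S_feasible_def by blast
    then show "(x$j)^2 \<le> z$j" by (simp add: z_def outer_def power2_eq_square)
  qed
  moreover have "v = (\<Sum>j\<in>UNIV. D$j$j * z$j) + 2 * (c \<bullet> x)"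
    using v matdot_diag[OF dD] by (simp add: z_def)
  ultimately show "v \<in> {(\<Sum>j\<in>UNIV. D$j$j * z$j) + 2 * (c \<bullet> x) | x z. R_feasible A a b x z}" by (intro CollectI exI conjI)
next
  fix v assume "v \<in> {(\<Sum>j\<in>UNIV. D$j$j * z$j) + 2 * (c \<bullet> x) | x z. R_feasible A a b x z}"
  then obtain x z where v: "v = (\<Sum>j\<in>UNIV. D$j$j * z$j) + 2 * (c \<bullet> x)" and R: "R_feasible A a b x z" by blast
  define d where "d = (\<chi> j. z$j - (x$j)^2)"
  define X where "X = outer x + (\<chi> r s. if r = s then d$r else (0::real))"
  have Xjj: "X$j$j = z$j" for j by (simp add: X_def d_def outer_def power2_eq_square)
  have "S_feasible A a b x X"
    unfolding S_feasible_def
  proof (intro conjI allI)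
    fix i show "mat_dot (A i) X + 2 * (a i \<bullet> x) \<le> b i"
    proof -
      have "(\<Sum>j\<in>UNIV. A i $ j $ j * z$j) + 2 * (a i \<bullet> x) \<le> b i" using R by (simp add: R_feasible_def)
      then show ?thesis using matdot_diag[of "A i" X] dA by (simp add: Xjj)
    qed
  next
    have e1: "X - outer x = (\<chi> r s. if r = s then d$r else (0::real))" unfolding X_def by simp
    have e2: "\<forall>j. 0 \<le> d$j" using R by (simp add: R_feasible_def d_def)
    show "psd (X - outer x)" unfolding e1 using diag_psd[OF e2] .
  qed
  moreover have "v = mat_dot D X + 2 * (c \<bullet> x)"
    using v matdot_diag[OF dD] by (simp add: Xjj)
  ultimately show "v \<in> {mat_dot D X + 2 * (c \<bullet> x) | x X. S_feasible A a b x X}" by (intro CollectI exI conjI)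
qed

lemma oneD:
  fixes q lc x z :: real
  assumes xz: "x^2 \<le> z" and m: "\<And>s t. s^2 \<le> t \<Longrightarrow> q*z + 2*lc*x \<le> q*t + 2*lc * s"
  shows "0 \<le> q \<and> q*x = -lc \<and> q*z = -lc*x \<and> (0 < q \<longrightarrow> z = x^2)"
proof -
  have q0: "0 \<le> q"
  proof (rule big_t[of "- (q*z + 2*lc*x)"])
    fix t :: real assume "0 \<le> t"
    have "q*z + 2*lc*x \<le> q*t + 2*lc*0" using m[of 0 t] \<open>0\<le>t\<close> by simp
    then show "0 \<le> - (q * z + 2 * lc * x) + t * q" by (simp add: algebra_simps)
  qed
  show ?thesis
  proof (cases "q = 0")
    case True
    have "q*z + 2*lc*x \<le> q*(x-lc)^2 + 2*lc*(x-lc)" using m[of "x-lc" "(x-lc)^2"] by simp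
    then have "lc*lc \<le> 0" using True by (simp add: algebra_simps)
    then have "lc = 0" by (metis mult_eq_0_iff not_square_less_zero order_antisym_conv zero_le_square)
    then show ?thesis using True by simp
  next
    case False
    then have qp: "0 < q" using q0 by simp
    have "q*z + 2*lc*x \<le> q*(-lc/q)^2 + 2*lc*(-lc/q)" using m[of "-lc/q" "(-lc/q)^2"] by simp
    also have "\<dots> = - (lc^2)/q" using qp by (simp add: power2_eq_square field_simps)
    finally have 1: "q*z + 2*lc*x \<le> - (lc^2)/q" .
    have 2: "q*z + 2*lc*x = q*(z - x^2) + q*(x + lc/q)^2 - (lc^2)/q" using qp
      by (simp add: power2_eq_square field_simps)
    have 3: "0 \<le> q*(z - x^2)" using qp xz by simp
    have 4: "0 \<le> q*(x + lc/q)^2" using qp by simp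
    have "q*(x + lc/q)^2 = 0" using 1 2 3 4 by linarith
    then have xe: "x = -lc/q" using qp by simp
    have "q*(z - x^2) = 0" using 1 2 3 4 by linarith
    then have ze: "z = x^2" using qp by simp
    have qx: "q*x = -lc" using xe qp by simp
    have "q*z = -lc*x" using ze qx by (simp add: power2_eq_square) (metis mult.assoc mult_minus_left)
    then show ?thesis using qx ze qp by simp
  qed
qed



lemma P_to_R:
  assumes dA: "\<forall>i. diag_mat (A i)" and P: "P_feasible A a b x"
  shows "R_feasible A a b x (\<chi> j. (x$j)^2)"
  unfolding R_feasible_def
proof (intro conjI allI)
  fix i
  have "x \<bullet> (A i *v x) + 2 * (a i \<bullet> x) \<le> b i" using P by (simp add: P_feasible_def)
  then show "(\<Sum>j\<in>UNIV. A i $ j $ j * (\<chi> j. (x$j)^2)$j) + 2 * (a i \<bullet> x) \<le> b i"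
    using diag_quad[of "A i" x] dA by simp
qed simp

lemma fR_P:
  assumes dD: "diag_mat D"
  shows "fR D c x (\<chi> j. (x$j)^2) = x \<bullet> (D *v x) + 2 * (c \<bullet> x)"
  using diag_quad[OF dD, of x] by (simp add: fR_def)

lemma perj:
  fixes W al x z :: real
  assumes W: "0 < W" and xz: "x^2 \<le> z"
  shows "W/2*z - 2*al^2/W \<le> W*z + 2*al*x"
proof -
  have e: "(W/2)*(x + 2*al/W)^2 = W/2*x^2 + 2*al*x + 2*al^2/W" using W
    by (simp add: field_simps power2_eq_square)
  have "0 \<le> (W/2)*(x + 2*al/W)^2" using W by simp
  moreover have "W/2*x^2 \<le> W/2*z" using W xz by simp
  ultimately show ?thesis using e by linarith
qed

lemma abs_le_sq: "(x::real)^2 \<le> z \<Longrightarrow> \<bar>x\<bar> \<le> 1 + z"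
proof (cases "\<bar>x\<bar> \<le> 1")
  case True
  moreover assume "x^2 \<le> z"
  moreover have "0 \<le> x^2" by simp
  ultimately show ?thesis by linarith
next
  case False
  assume xz: "x^2 \<le> z"
  have "\<bar>x\<bar> * 1 \<le> \<bar>x\<bar> * \<bar>x\<bar>" using False by (intro mult_left_mono) auto
  also have "\<dots> = x^2" by (simp add: power2_eq_square)
  finally show ?thesis using xz by linarith
qed

lemma R_min_exists:
  fixes D :: "real^'n::finite^'n" and A :: "'m::finite \<Rightarrow> real^'n^'n"
  assumes dA: "\<forall>i. diag_mat (A i)"
    and A1_i: "\<exists>x. P_feasible A a b x"
    and A1_ii: "\<exists>ybar :: 'm \<Rightarrow> real. (\<forall>i. 0 \<le> ybar i) \<and> pd (\<Sum>i\<in>UNIV. ybar i *\<^sub>R A i)"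
  shows "\<exists>x z. R_feasible A a b x z \<and> (\<forall>x' z'. R_feasible A a b x' z' \<longrightarrow> fR D c x z \<le> fR D c x' z')"
proof -
  define Fs :: "((real^'n) \<times> (real^'n)) set" where "Fs = {w. R_feasible A a b (fst w) (snd w)}"
  have Fs_eq: "Fs = (\<Inter>i. {w. gR A a b i (fst w) (snd w) \<le> 0}) \<inter> (\<Inter>j. {w. (fst w $ j)^2 \<le> snd w $ j})"
    unfolding Fs_def R_feas_gR by auto
  have cl: "closed Fs" unfolding Fs_eq gR_def inner_sum
    by (intro closed_Int closed_INT ballI closed_Collect_le continuous_intros)
  obtain ybar :: "'m \<Rightarrow> real" where yb: "\<forall>i. 0 \<le> ybar i" "pd (\<Sum>i\<in>UNIV. ybar i *\<^sub>R A i)"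
    using A1_ii by blast
  define W where "W j = (\<Sum>i\<in>UNIV. ybar i * A i $ j $ j)" for j
  define al where "al j = (\<Sum>i\<in>UNIV. ybar i * a i $ j)" for j
  define B where "B = (\<Sum>i\<in>UNIV. ybar i * b i)"
  have Wp: "0 < W j" for j
  proof -
    have "0 < (\<Sum>i\<in>UNIV. ybar i *\<^sub>R A i) $ j $ j" using pd_diag[OF yb(2)] .
    then show ?thesis by (simp add: W_def)
  qed
  define C where "C = B + (\<Sum>j\<in>UNIV. 2*(al j)^2 / W j)"
  have key: "(\<Sum>i\<in>UNIV. ybar i * gR A a b i x z) = (\<Sum>j\<in>UNIV. W j * z$j + 2 * al j * x$j) - B" for x z
  proof -
    have 1: "(\<Sum>i\<in>UNIV. ybar i * (\<Sum>j\<in>UNIV. A i $ j $ j * z$j)) = (\<Sum>j\<in>UNIV. W j * z$j)"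
    proof -
      have "(\<Sum>i\<in>UNIV. ybar i * (\<Sum>j\<in>UNIV. A i $ j $ j * z$j)) = (\<Sum>i\<in>UNIV. \<Sum>j\<in>UNIV. ybar i * A i $ j $ j * z$j)"
        by (simp add: sum_distrib_left mult.assoc)
      also have "\<dots> = (\<Sum>j\<in>UNIV. \<Sum>i\<in>UNIV. ybar i * A i $ j $ j * z$j)" by (rule sum.swap)
      also have "\<dots> = (\<Sum>j\<in>UNIV. W j * z$j)" by (simp add: W_def sum_distrib_right)
      finally show ?thesis .
    qed
    have 2: "(\<Sum>i\<in>UNIV. ybar i * (\<Sum>j\<in>UNIV. a i $ j * x$j)) = (\<Sum>j\<in>UNIV. al j * x$j)"
    proof -
      have "(\<Sum>i\<in>UNIV. ybar i * (\<Sum>j\<in>UNIV. a i $ j * x$j)) = (\<Sum>i\<in>UNIV. \<Sum>j\<in>UNIV. ybar i * a i $ j * x$j)"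
        by (simp add: sum_distrib_left mult.assoc)
      also have "\<dots> = (\<Sum>j\<in>UNIV. \<Sum>i\<in>UNIV. ybar i * a i $ j * x$j)" by (rule sum.swap)
      also have "\<dots> = (\<Sum>j\<in>UNIV. al j * x$j)" by (simp add: al_def sum_distrib_right)
      finally show ?thesis .
    qed
    have "(\<Sum>i\<in>UNIV. ybar i * gR A a b i x z) =
        (\<Sum>i\<in>UNIV. ybar i * (\<Sum>j\<in>UNIV. A i $ j $ j * z$j)) + 2 * (\<Sum>i\<in>UNIV. ybar i * (\<Sum>j\<in>UNIV. a i $ j * x$j)) - B"
      by (simp add: gR_def inner_sum B_def algebra_simps sum.distrib sum_subtractf sum_distrib_left)
    also have "\<dots> = (\<Sum>j\<in>UNIV. W j * z$j) + 2 * (\<Sum>j\<in>UNIV. al j * x$j) - B" using 1 2 by simp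
    also have "\<dots> = (\<Sum>j\<in>UNIV. W j * z$j + 2 * al j * x$j) - B"
      by (simp add: sum.distrib sum_distrib_left mult.assoc)
    finally show ?thesis .
  qed
  have zb: "z$k \<le> 2*C / W k" if R: "R_feasible A a b x z" for x z k
  proof -
    have gi: "gR A a b i x z \<le> 0" for i using R by (simp add: R_feas_gR)
    have xz: "(x$j)^2 \<le> z$j" for j using R by (simp add: R_feas_gR)
    have "(\<Sum>i\<in>UNIV. ybar i * gR A a b i x z) \<le> 0"
      using yb(1) gi by (intro sum_nonpos) (simp add: mult_nonneg_nonpos)
    then have s1: "(\<Sum>j\<in>UNIV. W j * z$j + 2 * al j * x$j) \<le> B" using key by simp
    have "(\<Sum>j\<in>UNIV. W j/2 * z$j - 2*(al j)^2 / W j) \<le> (\<Sum>j\<in>UNIV. W j * z$j + 2 * al j * x$j)"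
      by (intro sum_mono perj Wp xz)
    then have "(\<Sum>j\<in>UNIV. W j/2 * z$j) - (\<Sum>j\<in>UNIV. 2*(al j)^2 / W j) \<le> B"
      using s1 by (simp add: sum_subtractf)
    then have s2: "(\<Sum>j\<in>UNIV. W j/2 * z$j) \<le> C" by (simp add: C_def)
    have nn: "0 \<le> W j * z$j" for j
    proof -
      have "0 \<le> z$j" using xz[of j] by (metis order_trans zero_le_power2)
      then show ?thesis using Wp[of j] by simp
    qed
    have "W k/2 * z$k \<le> (\<Sum>j\<in>UNIV. W j/2 * z$j)"
      by (rule member_le_sum) (auto simp: nn)
    then have "W k/2 * z$k \<le> C" using s2 by linarith
    then show ?thesis using Wp[of k] by (simp add: field_simps)
  qed
  have bd: "bounded Fs"
    unfolding bounded_iff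
  proof (intro exI ballI)
    fix w assume "w \<in> Fs"
    then obtain x z where w: "w = (x,z)" and R: "R_feasible A a b x z" unfolding Fs_def by (cases w) auto
    have xz: "(x$j)^2 \<le> z$j" for j using R by (simp add: R_feas_gR)
    have z0: "0 \<le> z$j" for j using xz[of j] by (metis order_trans zero_le_power2)
    have "norm w \<le> norm x + norm z" unfolding w by (rule norm_Pair_le)
    also have "\<dots> \<le> (\<Sum>j\<in>UNIV. \<bar>x$j\<bar>) + (\<Sum>j\<in>UNIV. \<bar>z$j\<bar>)"
      by (intro add_mono norm_le_l1_cart)
    also have "\<dots> = (\<Sum>j\<in>UNIV. \<bar>x$j\<bar> + \<bar>z$j\<bar>)" by (simp add: sum.distrib)
    also have "\<dots> \<le> (\<Sum>j\<in>UNIV. 1 + 2 * (2*C / W j))"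
    proof (rule sum_mono)
      fix j
      have "\<bar>x$j\<bar> \<le> 1 + z$j" by (rule abs_le_sq[OF xz])
      moreover have "\<bar>z$j\<bar> = z$j" using z0 by simp
      moreover have "z$j \<le> 2*C / W j" by (rule zb[OF R])
      ultimately show "\<bar>x$j\<bar> + \<bar>z$j\<bar> \<le> 1 + 2 * (2*C / W j)" by linarith
    qed
    finally show "norm w \<le> (\<Sum>j\<in>UNIV. 1 + 2 * (2*C / W j))" .
  qed
  have cpt: "compact Fs" using cl bd by (simp add: compact_eq_bounded_closed)
  obtain x1 where "P_feasible A a b x1" using A1_i by blast
  then have "(x1, \<chi> j. (x1$j)^2) \<in> Fs" using P_to_R[OF dA] by (simp add: Fs_def)
  then have ne: "Fs \<noteq> {}" by blast
  have ct: "continuous_on Fs (\<lambda>w. fR D c (fst w) (snd w))"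
    unfolding fR_def inner_sum by (intro continuous_intros)
  obtain w where w: "w \<in> Fs" "\<forall>y\<in>Fs. fR D c (fst w) (snd w) \<le> fR D c (fst y) (snd y)"
    using continuous_attains_inf[OF cpt ne ct] by blast
  show ?thesis
  proof (intro exI conjI allI impI)
    show "R_feasible A a b (fst w) (snd w)" using w(1) by (simp add: Fs_def)
  next
    fix x' z' assume "R_feasible A a b x' z'"
    then have "(x',z') \<in> Fs" by (simp add: Fs_def)
    then show "fR D c (fst w) (snd w) \<le> fR D c x' z'" using w(2) by force
  qed
qed



lemma norm_axis_gen: "norm (axis k (v::'a::real_normed_vector)) = norm v"
proof -
  have "(\<Sum>i\<in>UNIV. (norm (axis k v $ i))^2) = (\<Sum>i\<in>UNIV. if i = k then (norm v)^2 else 0)"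
    by (intro sum.cong) (auto simp: axis_def)
  then have "(\<Sum>i\<in>UNIV. (norm (axis k v $ i))^2) = (norm v)^2" by simp
  then show ?thesis unfolding norm_vec_def L2_set_def by simp
qed

lemma gR_S:
  assumes dA: "\<forall>i. diag_mat (A i)" and S: "S_feasible A a b y Y"
  shows "gR A a b i y (\<chi> j. Y$j$j) \<le> 0"
proof -
  have "mat_dot (A i) Y + 2 * (a i \<bullet> y) \<le> b i" using S by (simp add: S_feasible_def)
  then show ?thesis using matdot_diag[of "A i" Y] dA by (simp add: gR_def)
qed

lemma slater:
  fixes A :: "'m::finite \<Rightarrow> real^'n::finite^'n"
  assumes dA: "\<forall>i. diag_mat (A i)" and A1_iii: "S_interior_nonempty A a b"
  shows "\<exists>x0 z0. (\<forall>j. (x0$j)^2 \<le> z0$j) \<and>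
     (\<forall>i. \<not> ((\<forall>j. A i $ j $ j = 0) \<and> a i = 0 \<and> b i = 0) \<longrightarrow> gR A a b i x0 z0 < 0)"
proof -
  obtain x0 X0 e where e: "e > 0" and sym: "transpose X0 = X0"
    and ball: "\<And>y Y. transpose Y = Y \<Longrightarrow> dist y x0 < e \<Longrightarrow> dist Y X0 < e \<Longrightarrow> S_feasible A a b y Y"
    using A1_iii unfolding S_interior_nonempty_def by blast
  define z0 where "z0 = (\<chi> j. X0$j$j)"
  have S0: "S_feasible A a b x0 X0" using ball[OF sym] e by simp
  have K0: "(x0$j)^2 \<le> z0$j" for j
  proof -
    have "0 \<le> (X0 - outer x0)$j$j" using S0 psd_diag unfolding S_feasible_def by blast
    then show ?thesis by (simp add: z0_def outer_def power2_eq_square)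
  qed
  have g0: "gR A a b i x0 z0 \<le> 0" for i using gR_S[OF dA S0] by (simp add: z0_def)
  have strict: "gR A a b i x0 z0 < 0" if nt: "\<not> ((\<forall>j. A i $ j $ j = 0) \<and> a i = 0 \<and> b i = 0)" for i
  proof (cases "a i = 0")
    case False
    define t where "t = e / (2 * norm (a i))"
    have np: "0 < norm (a i)" using False by simp
    have tp: "0 < t" using e np by (simp add: t_def)
    define y where "y = x0 + t *\<^sub>R a i"
    have "dist y x0 = t * norm (a i)" using tp by (simp add: y_def dist_norm)
    also have "\<dots> = e/2" using np by (simp add: t_def)
    finally have "dist y x0 < e" using e by simp
    then have Sy: "S_feasible A a b y X0" using ball[OF sym] e by simp
    have "gR A a b i y z0 \<le> 0" using gR_S[OF dA Sy] by (simp add: z0_def)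
    moreover have "gR A a b i y z0 = gR A a b i x0 z0 + 2 * t * (a i \<bullet> a i)"
      by (simp add: gR_def y_def inner_add_right algebra_simps)
    moreover have "0 < a i \<bullet> a i" using False by simp
    ultimately show ?thesis using tp by (smt (verit) mult_pos_pos)
  next
    case ai: True
    show ?thesis
    proof (cases "\<forall>j. A i $ j $ j = 0")
      case True
      then have "b i \<noteq> 0" using nt ai by blast
      moreover have "gR A a b i x0 z0 = - b i" using True ai by (simp add: gR_def)
      ultimately show ?thesis using g0[of i] by linarith
    next
      case False
      then obtain k where k: "A i $ k $ k \<noteq> 0" by blast
      define s where "s = e/2 * sgn (A i $ k $ k)"
      define Y where "Y = X0 + axis k (axis k s)"
      have symY: "transpose Y = Y"
      proof -
        have "X0 $ r $ q = X0 $ q $ r" for r q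
        proof -
          have "(transpose X0)$q$r = X0$q$r" using sym by simp
          then show ?thesis by (simp add: transpose_def)
        qed
        then show ?thesis unfolding Y_def by (auto simp: vec_eq_iff transpose_def axis_def)
      qed
      have "dist Y X0 = \<bar>s\<bar>" by (simp add: Y_def dist_norm norm_axis_gen)
      also have "\<dots> = e/2" using e k by (simp add: s_def abs_mult abs_sgn_eq)
      finally have "dist Y X0 < e" using e by simp
      then have SY: "S_feasible A a b x0 Y" using ball[OF symY] e by simp
      have "gR A a b i x0 (\<chi> j. Y$j$j) \<le> 0" using gR_S[OF dA SY] .
      moreover have "gR A a b i x0 (\<chi> j. Y$j$j) = gR A a b i x0 z0 + A i $ k $ k * s"
      proof -
        have "(\<Sum>j\<in>UNIV. A i $ j $ j * (\<chi> j. Y$j$j)$j) = (\<Sum>j\<in>UNIV. A i $ j $ j * z0$j + (if j = k then A i $ k $ k * s else 0))"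
          by (intro sum.cong) (auto simp: Y_def z0_def axis_def algebra_simps)
        then show ?thesis by (simp add: gR_def sum.distrib)
      qed
      moreover have "0 < A i $ k $ k * s"
      proof -
        have "A i $ k $ k * s = e/2 * \<bar>A i $ k $ k\<bar>" unfolding s_def by (simp add: abs_sgn mult_ac)
        moreover have "0 < e/2 * \<bar>A i $ k $ k\<bar>" using k e by simp
        ultimately show ?thesis by simp
      qed
      ultimately show ?thesis by linarith
    qed
  qed
  show ?thesis by (rule exI[of _ x0], rule exI[of _ z0]) (use K0 strict in blast)
qed



lemma sq_conv:
  fixes u v x1 x2 z1 z2 :: real
  assumes "0 \<le> u" "0 \<le> v" "u + v = 1" "x1^2 \<le> z1" "x2^2 \<le> z2"
  shows "(u * x1 + v * x2)^2 \<le> u * z1 + v * z2"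
proof -
  have vu: "v = 1 - u" using assms(3) by simp
  have "u * x1^2 + v * x2^2 - (u * x1 + v * x2)^2 = u * v * (x1-x2)^2"
    unfolding vu by (simp add: power2_eq_square algebra_simps)
  moreover have "0 \<le> u * v * (x1-x2)^2" using assms by simp
  moreover have "u * x1^2 \<le> u * z1" using assms by (simp add: mult_left_mono)
  moreover have "v * x2^2 \<le> v * z2" using assms by (simp add: mult_left_mono)
  ultimately show ?thesis by linarith
qed

lemma lag_id:
  "fR D c x z + (\<Sum>i\<in>UNIV. \<mu> i * gR A a b i x z) =
   (\<Sum>j\<in>UNIV. (D$j$j + (\<Sum>i\<in>UNIV. \<mu> i * A i $ j $ j)) * z$j + 2 * (c$j + (\<Sum>i\<in>UNIV. \<mu> i * a i $ j)) * x$j)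
     - (\<Sum>i\<in>UNIV. \<mu> i * b i)"
proof -
  have 1: "(\<Sum>i\<in>UNIV. \<mu> i * (\<Sum>j\<in>UNIV. A i $ j $ j * z$j)) = (\<Sum>j\<in>UNIV. (\<Sum>i\<in>UNIV. \<mu> i * A i $ j $ j) * z$j)"
  proof -
    have "(\<Sum>i\<in>UNIV. \<mu> i * (\<Sum>j\<in>UNIV. A i $ j $ j * z$j)) = (\<Sum>i\<in>UNIV. \<Sum>j\<in>UNIV. \<mu> i * A i $ j $ j * z$j)"
      by (simp add: sum_distrib_left mult.assoc)
    also have "\<dots> = (\<Sum>j\<in>UNIV. \<Sum>i\<in>UNIV. \<mu> i * A i $ j $ j * z$j)" by (rule sum.swap)
    also have "\<dots> = (\<Sum>j\<in>UNIV. (\<Sum>i\<in>UNIV. \<mu> i * A i $ j $ j) * z$j)" by (simp add: sum_distrib_right)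
    finally show ?thesis .
  qed
  have 2: "(\<Sum>i\<in>UNIV. \<mu> i * (\<Sum>j\<in>UNIV. a i $ j * x$j)) = (\<Sum>j\<in>UNIV. (\<Sum>i\<in>UNIV. \<mu> i * a i $ j) * x$j)"
  proof -
    have "(\<Sum>i\<in>UNIV. \<mu> i * (\<Sum>j\<in>UNIV. a i $ j * x$j)) = (\<Sum>i\<in>UNIV. \<Sum>j\<in>UNIV. \<mu> i * a i $ j * x$j)"
      by (simp add: sum_distrib_left mult.assoc)
    also have "\<dots> = (\<Sum>j\<in>UNIV. \<Sum>i\<in>UNIV. \<mu> i * a i $ j * x$j)" by (rule sum.swap)
    also have "\<dots> = (\<Sum>j\<in>UNIV. (\<Sum>i\<in>UNIV. \<mu> i * a i $ j) * x$j)" by (simp add: sum_distrib_right)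
    finally show ?thesis .
  qed
  have "(\<Sum>i\<in>UNIV. \<mu> i * gR A a b i x z) =
      (\<Sum>i\<in>UNIV. \<mu> i * (\<Sum>j\<in>UNIV. A i $ j $ j * z$j)) + 2 * (\<Sum>i\<in>UNIV. \<mu> i * (\<Sum>j\<in>UNIV. a i $ j * x$j)) - (\<Sum>i\<in>UNIV. \<mu> i * b i)"
    by (simp add: gR_def inner_sum algebra_simps sum.distrib sum_subtractf sum_distrib_left)
  also have "\<dots> = (\<Sum>j\<in>UNIV. (\<Sum>i\<in>UNIV. \<mu> i * A i $ j $ j) * z$j) + 2 * (\<Sum>j\<in>UNIV. (\<Sum>i\<in>UNIV. \<mu> i * a i $ j) * x$j) - (\<Sum>i\<in>UNIV. \<mu> i * b i)"
    using 1 2 by simp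
  finally have 3: "(\<Sum>i\<in>UNIV. \<mu> i * gR A a b i x z) = \<dots>" .
  show ?thesis unfolding 3 fR_def inner_sum
    by (simp add: algebra_simps sum.distrib sum_distrib_left)
qed

lemma coord_min:
  fixes \<phi> :: "'n::finite \<Rightarrow> real \<Rightarrow> real \<Rightarrow> real"
  assumes lo: "\<And>x z. (\<forall>k. (x$k)^2 \<le> z$k) \<Longrightarrow> P0 \<le> (\<Sum>k\<in>UNIV. \<phi> k (x$k) (z$k))"
    and hi: "(\<Sum>k\<in>UNIV. \<phi> k (xs$k) (zs$k)) \<le> P0"
    and K: "\<forall>k. (xs$k)^2 \<le> zs$k" and st: "s^2 \<le> t"
  shows "\<phi> j (xs$j) (zs$j) \<le> \<phi> j s t"
proof -
  define x' where "x' = (\<chi> k. if k = j then s else xs$k)"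
  define z' where "z' = (\<chi> k. if k = j then t else zs$k)"
  have "\<forall>k. (x'$k)^2 \<le> z'$k" using K st by (simp add: x'_def z'_def)
  then have l: "P0 \<le> (\<Sum>k\<in>UNIV. \<phi> k (x'$k) (z'$k))" by (rule lo)
  have "(\<Sum>k\<in>UNIV. \<phi> k (x'$k) (z'$k)) - (\<Sum>k\<in>UNIV. \<phi> k (xs$k) (zs$k))
      = (\<Sum>k\<in>UNIV. if k = j then \<phi> j s t - \<phi> j (xs$j) (zs$j) else 0)"
    unfolding sum_subtractf[symmetric] by (intro sum.cong) (auto simp: x'_def z'_def)
  also have "\<dots> = \<phi> j s t - \<phi> j (xs$j) (zs$j)" by simp
  finally show ?thesis using l hi by linarith
qed

lemma part_idx_eq:
  assumes disj: "\<forall>h h'. h \<noteq> h' \<longrightarrow> Np h \<inter> Np h' = {}" and j: "j \<in> Np h"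
  shows "part_idx Np j = h"
  unfolding part_idx_def by (rule the_equality) (use assms in blast)+

lemma dstar_le: "j \<in> Np h \<Longrightarrow> dstar D Np h \<le> D$j$j"
  unfolding dstar_def by (rule Min_le) auto

theorem mainTheorem5:
  fixes D :: "real^'n::finite^'n" and c :: "real^'n"
    and A :: "'m::finite \<Rightarrow> real^'n^'n" and a :: "'m \<Rightarrow> real^'n" and b :: "'m \<Rightarrow> real"
    and Np :: "'h::finite \<Rightarrow> 'n set" and \<xi> :: "'m \<Rightarrow> 'h \<Rightarrow> real" and jh :: "'h \<Rightarrow> 'n"
  assumes diagD: "diag_mat D"
    and diagA: "\<forall>i. diag_mat (A i)"
    and A1_i: "\<exists>x. P_feasible A a b x"
    and A1_ii: "\<exists>ybar :: 'm \<Rightarrow> real. (\<forall>i. 0 \<le> ybar i) \<and> pd (\<Sum>i\<in>UNIV. ybar i *\<^sub>R A i)"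
    and A1_iii: "S_interior_nonempty A a b"
    and part_ne: "\<forall>h. Np h \<noteq> {}"
    and part_disj: "\<forall>h h'. h \<noteq> h' \<longrightarrow> Np h \<inter> Np h' = {}"
    and part_cover: "(\<Union>h. Np h) = UNIV"
    and xi: "\<forall>i h. \<forall>j\<in>Np h. A i $ j $ j = \<xi> i h"
    and jh_in: "\<forall>h. jh h \<in> Np h"
    and jh_min: "\<forall>h. D $ jh h $ jh h = dstar D Np h"
    and jh_unique: "\<forall>h. \<forall>j\<in>Np h. D $ j $ j = dstar D Np h \<longrightarrow> j = jh h"
    and cond: "\<forall>h. \<not> (\<exists>(\<mu> :: 'm \<Rightarrow> real) (xx :: 'h \<Rightarrow> real) (zz :: 'h \<Rightarrow> real).
        dstar D Np h + (\<Sum>i\<in>UNIV. \<mu> i * \<xi> i h) = 0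
      \<and> c $ jh h + (\<Sum>i\<in>UNIV. \<mu> i * a i $ jh h) = 0
      \<and> (\<forall>h'. h' \<noteq> h \<longrightarrow> dstar D Np h' + (\<Sum>i\<in>UNIV. \<mu> i * \<xi> i h') \<ge> 0)
      \<and> (\<forall>h'. h' \<noteq> h \<longrightarrow> (dstar D Np h' + (\<Sum>i\<in>UNIV. \<mu> i * \<xi> i h')) * xx h'
                          = - (c $ jh h' + (\<Sum>i\<in>UNIV. \<mu> i * a i $ jh h')))
      \<and> (\<forall>h'. h' \<noteq> h \<longrightarrow> (dstar D Np h' + (\<Sum>i\<in>UNIV. \<mu> i * \<xi> i h')) * zz h'
                          = - (c $ jh h' + (\<Sum>i\<in>UNIV. \<mu> i * a i $ jh h')) * xx h')
      \<and> (\<forall>i. (\<Sum>h'\<in>UNIV. \<xi> i h' * (zz h' + (\<Sum>j\<in>Np h' - {jh h'}. (xh D c a Np \<xi> h \<mu> j)^2)))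
              + 2 * (\<Sum>h'\<in>UNIV. a i $ jh h' * xx h')
              + 2 * (\<Sum>j\<in>UNIV - range jh. a i $ j * xh D c a Np \<xi> h \<mu> j) \<le> b i)
      \<and> (\<forall>h'. (xx h')^2 \<le> zz h')
      \<and> (\<forall>i. 0 \<le> \<mu> i))"
  shows "vstar D c A a b = cstar D c A a b \<and> pstar D c A a b = cstar D c A a b"
proof -
  have vp: "vstar D c A a b = pstar D c A a b"
    unfolding vstar_def pstar_def using SR_sets[OF diagD diagA] by simp
  obtain xs zs where Rs: "R_feasible A a b xs zs"
    and mins: "\<forall>x' z'. R_feasible A a b x' z' \<longrightarrow> fR D c xs zs \<le> fR D c x' z'"
    using R_min_exists[OF diagA A1_i A1_ii, of D c] by blast
  define p where "p = fR D c xs zs"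
  obtain x0 z0 where K0: "\<forall>j. (x0$j)^2 \<le> z0$j"
    and sl: "\<forall>i. \<not> ((\<forall>j. A i $ j $ j = 0) \<and> a i = 0 \<and> b i = 0) \<longrightarrow> gR A a b i x0 z0 < 0"
    using slater[OF diagA A1_iii] by blast
  define T where "T i = ((\<forall>j. A i $ j $ j = 0) \<and> a i = 0 \<and> b i = 0)" for i
  define Ks :: "((real^'n) \<times> (real^'n)) set" where "Ks = {w. \<forall>j. (fst w $ j)^2 \<le> snd w $ j}"
  have cvx: "convex Ks"
  proof (rule convexI)
    fix w1 w2 :: "(real^'n) \<times> (real^'n)" and u v :: real
    assume "w1 \<in> Ks" "w2 \<in> Ks" "0 \<le> u" "0 \<le> v" "u + v = 1"
    then show "u *\<^sub>R w1 + v *\<^sub>R w2 \<in> Ks" unfolding Ks_def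
      by (auto intro: sq_conv)
  qed
  have fl: "fR D c (fst (u *\<^sub>R x + v *\<^sub>R y)) (snd (u *\<^sub>R x + v *\<^sub>R y))
      = u * fR D c (fst x) (snd x) + v * fR D c (fst y) (snd y)" if "u + v = 1" for u v and x y :: "(real^'n) \<times> (real^'n)"
    by (simp add: fR_def inner_sum algebra_simps sum.distrib sum_distrib_left)
  have gl: "gR A a b i (fst (u *\<^sub>R x + v *\<^sub>R y)) (snd (u *\<^sub>R x + v *\<^sub>R y))
      = u * gR A a b i (fst x) (snd x) + v * gR A a b i (fst y) (snd y)" if uv: "u + v = 1" for i u v and x y :: "(real^'n) \<times> (real^'n)"
  proof -
    have bb: "u * b i + v * b i = b i" using uv by (metis distrib_right mult.left_neutral)
    define lin where "lin w = (\<Sum>j\<in>UNIV. A i $ j $ j * snd w $ j) + 2 * (a i \<bullet> fst w)" for w :: "(real^'n) \<times> (real^'n)"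
    have gRl: "gR A a b i (fst w) (snd w) = lin w - b i" for w by (simp add: gR_def lin_def)
    have ll: "lin (u *\<^sub>R x + v *\<^sub>R y) = u * lin x + v * lin y"
      by (simp add: lin_def inner_sum algebra_simps sum.distrib sum_distrib_left)
    have e2: "u * (lin x - b i) + v * (lin y - b i) = u * lin x + v * lin y - (u * b i + v * b i)"
      by (simp add: algebra_simps)
    show ?thesis unfolding gRl ll e2 bb ..
  qed
  have opt: "p \<le> fR D c (fst w) (snd w)" if "w \<in> Ks" "\<forall>i. gR A a b i (fst w) (snd w) \<le> 0" for w
  proof -
    have "R_feasible A a b (fst w) (snd w)" using that unfolding R_feas_gR Ks_def by auto
    then show ?thesis using mins p_def by blast
  qed
  have triv: "gR A a b i (fst w) (snd w) = 0" if "T i" for i w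
    using that by (simp add: T_def gR_def)
  have w0: "(x0, z0) \<in> Ks" using K0 by (simp add: Ks_def)
  have w0s: "gR A a b i (fst (x0,z0)) (snd (x0,z0)) < 0" if "\<not> T i" for i
    using sl that by (simp add: T_def)
  obtain \<mu> where \<mu>0: "\<forall>i. 0 \<le> \<mu> i"
    and lag: "\<forall>w\<in>Ks. p \<le> fR D c (fst w) (snd w) + (\<Sum>i\<in>UNIV. \<mu> i * gR A a b i (fst w) (snd w))"
    using lagrange[where f="\<lambda>w. fR D c (fst w) (snd w)" and g="\<lambda>i w. gR A a b i (fst w) (snd w)"
        and T=T and p=p, OF cvx fl gl opt triv w0 w0s] by blast
  define q where "q j = D$j$j + (\<Sum>i\<in>UNIV. \<mu> i * A i $ j $ j)" for j
  define l where "l j = c$j + (\<Sum>i\<in>UNIV. \<mu> i * a i $ j)" for j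
  define Bm where "Bm = (\<Sum>i\<in>UNIV. \<mu> i * b i)"
  have LI: "fR D c x z + (\<Sum>i\<in>UNIV. \<mu> i * gR A a b i x z) = (\<Sum>j\<in>UNIV. q j * z$j + 2 * l j * x$j) - Bm" for x z
    unfolding q_def l_def Bm_def by (rule lag_id)
  have Kxs: "\<forall>k. (xs$k)^2 \<le> zs$k" using Rs by (simp add: R_feas_gR)
  have gs: "gR A a b i xs zs \<le> 0" for i using Rs by (simp add: R_feas_gR)
  have lo: "p + Bm \<le> (\<Sum>k\<in>UNIV. q k * z$k + 2 * l k * x$k)" if "\<forall>k. (x$k)^2 \<le> z$k" for x z
  proof -
    have "(x,z) \<in> Ks" using that by (simp add: Ks_def)
    then have "p \<le> fR D c x z + (\<Sum>i\<in>UNIV. \<mu> i * gR A a b i x z)" using lag by force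
    then show ?thesis using LI[of x z] by linarith
  qed
  have hi: "(\<Sum>k\<in>UNIV. q k * zs$k + 2 * l k * xs$k) \<le> p + Bm"
  proof -
    have "(\<Sum>i\<in>UNIV. \<mu> i * gR A a b i xs zs) \<le> 0"
      using \<mu>0 gs by (intro sum_nonpos) (simp add: mult_nonneg_nonpos)
    then show ?thesis using LI[of xs zs] p_def by linarith
  qed
  have cm: "q j * zs$j + 2 * l j * xs$j \<le> q j * t + 2 * l j * s" if "s^2 \<le> t" for j s t
    using coord_min[where \<phi>="\<lambda>k x z. q k * z + 2 * l k * x", OF lo hi Kxs that] by simp
  have od: "0 \<le> q j \<and> q j * xs$j = - l j \<and> q j * zs$j = - l j * xs$j \<and> (0 < q j \<longrightarrow> zs$j = (xs$j)^2)" for j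
    by (rule oneD[OF Kxs[rule_format] cm])
  have inj: "inj jh"
  proof (rule injI)
    fix h1 h2 assume "jh h1 = jh h2"
    then have "jh h1 \<in> Np h1 \<inter> Np h2" using jh_in by (metis IntI)
    then show "h1 = h2" using part_disj by blast
  qed
  have qxi: "q j = D$j$j + (\<Sum>i\<in>UNIV. \<mu> i * \<xi> i h)" if "j \<in> Np h" for j h
    using xi that by (simp add: q_def)
  have qjh: "q (jh h) = dstar D Np h + (\<Sum>i\<in>UNIV. \<mu> i * \<xi> i h)" for h
    using qxi[OF jh_in[rule_format]] jh_min by simp
  have nonjh: "\<exists>h'. j \<in> Np h' \<and> j \<noteq> jh h'" if "j \<notin> range jh" for j
  proof -
    obtain h' where "j \<in> Np h'" using part_cover by blast
    then show ?thesis using that by blast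
  qed
  have qpos: "0 < q j" if nj: "j \<notin> range jh" for j
  proof -
    obtain h' where h': "j \<in> Np h'" "j \<noteq> jh h'" using nonjh[OF nj] by blast
    have "dstar D Np h' \<le> D$j$j" by (rule dstar_le[of j Np h' D, OF h'(1)])
    moreover have "D$j$j \<noteq> dstar D Np h'" using jh_unique h' by blast
    ultimately have "dstar D Np h' < D$j$j" by simp
    then have "q (jh h') < q j" using qjh[of h'] qxi[OF h'(1)] by simp
    then show ?thesis using od[of "jh h'"] by linarith
  qed
  have exact: "\<forall>j. zs$j = (xs$j)^2"
  proof (rule ccontr)
    assume "\<not> (\<forall>j. zs$j = (xs$j)^2)"
    then obtain j0 where j0: "zs$j0 \<noteq> (xs$j0)^2" by blast
    then have "\<not> 0 < q j0" using od[of j0] by blast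
    then have qj0: "q j0 = 0" using od[of j0] by linarith
    then obtain h where jh0: "j0 = jh h" using qpos by (metis imageE order_less_irrefl)
    have a_: "dstar D Np h + (\<Sum>i\<in>UNIV. \<mu> i * \<xi> i h) = 0" using qj0 qjh[of h] jh0 by simp
    have b_: "c $ jh h + (\<Sum>i\<in>UNIV. \<mu> i * a i $ jh h) = 0" using od[of j0] qj0 jh0 by (simp add: l_def)
    define xx where "xx h' = xs $ jh h'" for h'
    define zz where "zz h' = zs $ jh h'" for h'
    have xhv: "xs$j = xh D c a Np \<xi> h \<mu> j \<and> zs$j = (xs$j)^2" if nj: "j \<notin> range jh" for j
    proof -
      obtain h' where h': "j \<in> Np h'" "j \<noteq> jh h'" using nonjh[OF nj] by blast
      have qp: "0 < q j" using qpos[OF nj] .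
      have x1: "xs$j = - l j / q j" using od[of j] qp by (simp add: field_simps)
      have pi: "part_idx Np j = h'" using part_idx_eq[OF part_disj h'(1)] .
      have "xh D c a Np \<xi> h \<mu> j = - l j / q j"
      proof (cases "h' = h")
        case True
        have "q j = D$j$j - dstar D Np h" using qxi[OF h'(1)] True a_ by simp
        then show ?thesis using True by (simp add: xh_def Let_def pi l_def)
      next
        case False
        have "q j = D$j$j + (\<Sum>i\<in>UNIV. \<xi> i h' * \<mu> i)" using qxi[OF h'(1)] by (simp add: mult.commute)
        then show ?thesis using False by (simp add: xh_def Let_def pi l_def)
      qed
      then show ?thesis using x1 od[of j] qp by simp
    qed
    have f_: "(\<Sum>h'\<in>UNIV. \<xi> i h' * (zz h' + (\<Sum>j\<in>Np h' - {jh h'}. (xh D c a Np \<xi> h \<mu> j)^2)))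
              + 2 * (\<Sum>h'\<in>UNIV. a i $ jh h' * xx h')
              + 2 * (\<Sum>j\<in>UNIV - range jh. a i $ j * xh D c a Np \<xi> h \<mu> j) \<le> b i" for i
    proof -
      have U: "(UNIV :: 'n set) = (\<Union>(Np ` UNIV))" using part_cover by simp
      have s1: "(\<Sum>j\<in>UNIV. A i $ j $ j * zs$j) = (\<Sum>h'\<in>UNIV. \<Sum>j\<in>Np h'. A i $ j $ j * zs$j)"
        by (subst U, rule sum.UNION_disjoint) (use part_disj in auto)
      have s2: "(\<Sum>j\<in>Np h'. A i $ j $ j * zs$j) = \<xi> i h' * (zz h' + (\<Sum>j\<in>Np h' - {jh h'}. (xh D c a Np \<xi> h \<mu> j)^2))" for h'
      proof -
        have "(\<Sum>j\<in>Np h'. A i $ j $ j * zs$j) = (\<Sum>j\<in>Np h'. \<xi> i h' * zs$j)"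
          using xi by (intro sum.cong) auto
        also have "\<dots> = \<xi> i h' * (\<Sum>j\<in>Np h'. zs$j)" by (simp add: sum_distrib_left)
        also have "(\<Sum>j\<in>Np h'. zs$j) = zs $ jh h' + (\<Sum>j\<in>Np h' - {jh h'}. zs$j)"
          using jh_in by (intro sum.remove) auto
        also have "(\<Sum>j\<in>Np h' - {jh h'}. zs$j) = (\<Sum>j\<in>Np h' - {jh h'}. (xh D c a Np \<xi> h \<mu> j)^2)"
        proof (rule sum.cong[OF refl])
          fix j assume j: "j \<in> Np h' - {jh h'}"
          have "j \<notin> range jh"
          proof
            assume "j \<in> range jh"
            then obtain h2 where "j = jh h2" by blast
            then have "h2 = h'" using j jh_in part_disj by blast
            then show False using j \<open>j = jh h2\<close> by simp
          qed
          then show "zs$j = (xh D c a Np \<xi> h \<mu> j)^2" using xhv by simp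
        qed
        finally show ?thesis by (simp add: zz_def)
      qed
      have s3: "(\<Sum>j\<in>UNIV. a i $ j * xs$j) = (\<Sum>j\<in>UNIV - range jh. a i $ j * xs$j) + (\<Sum>j\<in>range jh. a i $ j * xs$j)"
        by (rule sum.subset_diff) auto
      have s4: "(\<Sum>j\<in>range jh. a i $ j * xs$j) = (\<Sum>h'\<in>UNIV. a i $ jh h' * xx h')"
        using sum.reindex[OF inj, of "\<lambda>j. a i $ j * xs$j"] by (simp add: xx_def)
      have s5: "(\<Sum>j\<in>UNIV - range jh. a i $ j * xs$j) = (\<Sum>j\<in>UNIV - range jh. a i $ j * xh D c a Np \<xi> h \<mu> j)"
        using xhv by (intro sum.cong) auto
      have "gR A a b i xs zs \<le> 0" by (rule gs)
      then show ?thesis unfolding gR_def inner_sum s1 s2 s3 s4 s5 by simp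
    qed
    have "\<exists>(\<mu> :: 'm \<Rightarrow> real) (xx :: 'h \<Rightarrow> real) (zz :: 'h \<Rightarrow> real).
        dstar D Np h + (\<Sum>i\<in>UNIV. \<mu> i * \<xi> i h) = 0
      \<and> c $ jh h + (\<Sum>i\<in>UNIV. \<mu> i * a i $ jh h) = 0
      \<and> (\<forall>h'. h' \<noteq> h \<longrightarrow> dstar D Np h' + (\<Sum>i\<in>UNIV. \<mu> i * \<xi> i h') \<ge> 0)
      \<and> (\<forall>h'. h' \<noteq> h \<longrightarrow> (dstar D Np h' + (\<Sum>i\<in>UNIV. \<mu> i * \<xi> i h')) * xx h'
                          = - (c $ jh h' + (\<Sum>i\<in>UNIV. \<mu> i * a i $ jh h')))
      \<and> (\<forall>h'. h' \<noteq> h \<longrightarrow> (dstar D Np h' + (\<Sum>i\<in>UNIV. \<mu> i * \<xi> i h')) * zz h'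
                          = - (c $ jh h' + (\<Sum>i\<in>UNIV. \<mu> i * a i $ jh h')) * xx h')
      \<and> (\<forall>i. (\<Sum>h'\<in>UNIV. \<xi> i h' * (zz h' + (\<Sum>j\<in>Np h' - {jh h'}. (xh D c a Np \<xi> h \<mu> j)^2)))
              + 2 * (\<Sum>h'\<in>UNIV. a i $ jh h' * xx h')
              + 2 * (\<Sum>j\<in>UNIV - range jh. a i $ j * xh D c a Np \<xi> h \<mu> j) \<le> b i)
      \<and> (\<forall>h'. (xx h')^2 \<le> zz h')
      \<and> (\<forall>i. 0 \<le> \<mu> i)"
    proof (intro exI conjI allI impI)
      show "dstar D Np h + (\<Sum>i\<in>UNIV. \<mu> i * \<xi> i h) = 0" by (rule a_)
      show "c $ jh h + (\<Sum>i\<in>UNIV. \<mu> i * a i $ jh h) = 0" by (rule b_)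
      fix h'
      show "dstar D Np h' + (\<Sum>i\<in>UNIV. \<mu> i * \<xi> i h') \<ge> 0" using od[of "jh h'"] qjh[of h'] by simp
      show "(dstar D Np h' + (\<Sum>i\<in>UNIV. \<mu> i * \<xi> i h')) * xx h' = - (c $ jh h' + (\<Sum>i\<in>UNIV. \<mu> i * a i $ jh h'))"
        using od[of "jh h'"] qjh[of h'] by (simp add: xx_def l_def)
      show "(dstar D Np h' + (\<Sum>i\<in>UNIV. \<mu> i * \<xi> i h')) * zz h' = - (c $ jh h' + (\<Sum>i\<in>UNIV. \<mu> i * a i $ jh h')) * xx h'"
        using od[of "jh h'"] qjh[of h'] by (simp add: xx_def zz_def l_def)
    next
      fix i show "(\<Sum>h'\<in>UNIV. \<xi> i h' * (zz h' + (\<Sum>j\<in>Np h' - {jh h'}. (xh D c a Np \<xi> h \<mu> j)^2)))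
              + 2 * (\<Sum>h'\<in>UNIV. a i $ jh h' * xx h')
              + 2 * (\<Sum>j\<in>UNIV - range jh. a i $ j * xh D c a Np \<xi> h \<mu> j) \<le> b i" by (rule f_)
    next
      fix h' show "(xx h')^2 \<le> zz h'" using Kxs by (simp add: xx_def zz_def)
    next
      fix i show "0 \<le> \<mu> i" using \<mu>0 by simp
    qed
    then show False using cond by blast
  qed
  have zse: "zs = (\<chi> j. (xs$j)^2)" using exact by (simp add: vec_eq_iff)
  have Pxs: "P_feasible A a b xs"
    unfolding P_feasible_def
  proof
    fix i
    have "gR A a b i xs zs \<le> 0" by (rule gs)
    then show "xs \<bullet> (A i *v xs) + 2 * (a i \<bullet> xs) \<le> b i"
      using diag_quad[of "A i" xs] diagA exact by (simp add: gR_def)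
  qed
  have cs: "cstar D c A a b = p"
    unfolding cstar_def
  proof (rule cInf_eq_minimum)
    show "p \<in> {x \<bullet> (D *v x) + 2 * (c \<bullet> x) |x. P_feasible A a b x}"
      using Pxs fR_P[OF diagD, of c xs] zse p_def by auto
  next
    fix v assume "v \<in> {x \<bullet> (D *v x) + 2 * (c \<bullet> x) |x. P_feasible A a b x}"
    then obtain x where v: "v = x \<bullet> (D *v x) + 2 * (c \<bullet> x)" and P: "P_feasible A a b x" by blast
    have "p \<le> fR D c x (\<chi> j. (x$j)^2)" using mins P_to_R[OF diagA P] p_def by blast
    then show "p \<le> v" using v fR_P[OF diagD, of c x] by simp
  qed
  have ps: "pstar D c A a b = p"
    unfolding pstar_def
  proof (rule cInf_eq_minimum)
    show "p \<in> {(\<Sum>j\<in>UNIV. D$j$j * z$j) + 2 * (c \<bullet> x) | x z. R_feasible A a b x z}"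
      using Rs p_def unfolding fR_def by blast
  next
    fix v assume "v \<in> {(\<Sum>j\<in>UNIV. D$j$j * z$j) + 2 * (c \<bullet> x) | x z. R_feasible A a b x z}"
    then obtain x z where "v = fR D c x z" "R_feasible A a b x z" unfolding fR_def by blast
    then show "p \<le> v" using mins p_def by blast
  qed
  show ?thesis using vp cs ps by simp
qed


end
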